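(* The fixed point set $\mathrm{Fix}\,R=\{x\in[0,1]:R(x)=x\}$ is an uncountable subset of $[0,1]\setminus\mathscr D$, and its closure $\overline{\mathrm{Fix}\,R}$ is a Cantor set of Lebesgue measure zero with $\overline{\mathrm{Fix}\,R}\setminus\mathrm{Fix}\,R\subset\mathscr D$.
   Context: Define $\rho$ on binary words: for $b=b_1b_2\dots$, $\rho(b)$ is obtained by deleting every digit $b_n=0$ and replacing every $b_n=1$ by $0$ if $n$ is odd and by $1$ if $n$ is even. For $x\in(0,1]$ let $\beta(x)$ be the unique binary expansion of $x$ with infinitely many $1$'s. Define $R:[0,1]\to[0,1]$ by $R(0)=2/3$ and, for $x\in(0,1]$, $R(x)=\sum_{n\ge1}c_n2^{-n}$ where $c=\rho(\beta(x))$. $\mathscr D$ is the set of dyadic rationals in $[0,1]$. *)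

theory Defs
  imports "HOL-Analysis.Analysis"
begin

text \<open>Infinite binary words are sequences b :: nat \<Rightarrow> bool, where b i is the
digit b_(i+1) of the paper (True = 1). Position i (0-based) is odd in the
paper's 1-based numbering iff i is even.\<close>

definition bin_val :: "(nat \<Rightarrow> bool) \<Rightarrow> real" where
  "bin_val b = (\<Sum>n. (if b n then 1 else 0) / 2 ^ (n + 1))"

definition beta :: "real \<Rightarrow> (nat \<Rightarrow> bool)" where
  "beta x = (THE b. infinite {n. b n} \<and> bin_val b = x)"

text \<open>rho on words with infinitely many 1's: the zeros are deleted, and the
k-th remaining 1 (at 1-based position n) becomes 0 if n is odd, 1 if n is even.
With 0-based positions i = n - 1 this is: output digit k is 1 iff the
0-based position of the k-th one is odd.\<close>
definition rho :: "(nat \<Rightarrow> bool) \<Rightarrow> (nat \<Rightarrow> bool)" where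
  "rho b = (\<lambda>k. odd (enumerate {i. b i} k))"

definition R :: "real \<Rightarrow> real" where
  "R x = (if x = 0 then 2 / 3 else bin_val (rho (beta x)))"

definition dyadic :: "real set" where
  "dyadic = {x \<in> {0..1}. \<exists>(k::int) (n::nat). x = real_of_int k / 2 ^ n}"

definition FixR :: "real set" where
  "FixR = {x \<in> {0..1}. R x = x}"

definition cantor_set :: "real set \<Rightarrow> bool" where
  "cantor_set S \<longleftrightarrow> S \<noteq> {} \<and> compact S \<and> (\<forall>x\<in>S. x islimpt S)
     \<and> (\<forall>C. C \<subseteq> S \<longrightarrow> connected C \<longrightarrow> (\<exists>a. C \<subseteq> {a}))"

end

theory Submission
  imports Defs
begin

definition dg :: "(nat \<Rightarrow> bool) \<Rightarrow> nat \<Rightarrow> real" where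
  "dg b n = (if b n then 1 else 0) / 2 ^ (n + 1)"

lemma dg_nonneg: "0 \<le> dg b n" by (simp add: dg_def)
lemma dg_le: "dg b n \<le> (1/2)^Suc n" by (simp add: dg_def power_divide)

lemma summable_dg: "summable (dg b)"
  by (rule summable_comparison_test'[OF sums_summable[OF power_half_series], of 0])
     (simp add: dg_def power_divide)

lemma bin_val_dg: "bin_val b = suminf (dg b)"
  unfolding bin_val_def dg_def[abs_def] by (rule refl)

lemma bin_val_nonneg: "0 \<le> bin_val b"
  unfolding bin_val_dg by (rule suminf_nonneg[OF summable_dg dg_nonneg])

lemma bin_val_le1: "bin_val b \<le> 1"
proof -
  have "suminf (dg b) \<le> (\<Sum>n. (1/2::real)^Suc n)"
    by (rule suminf_le[OF dg_le summable_dg sums_summable[OF power_half_series]])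
  then show ?thesis using power_half_series sums_unique bin_val_dg by metis
qed

lemma bin_val_pos: "b i \<Longrightarrow> 0 < bin_val b"
  unfolding bin_val_dg by (rule suminf_pos2[OF summable_dg dg_nonneg]) (simp add: dg_def)

lemma bin_val_lt1: "\<not> b i \<Longrightarrow> bin_val b < 1"
proof -
  assume nb: "\<not> b i"
  have s: "summable (\<lambda>n. (1/2::real)^Suc n - dg b n)"
    by (rule summable_diff[OF sums_summable[OF power_half_series] summable_dg])
  have "0 < (\<Sum>n. (1/2::real)^Suc n - dg b n)"
    by (rule suminf_pos2[OF s, of i]) (use nb dg_le in \<open>auto simp: dg_def\<close>)
  also have "\<dots> = 1 - bin_val b"
    using suminf_diff[OF sums_summable[OF power_half_series] summable_dg] power_half_series sums_unique bin_val_dg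
    by metis
  finally show ?thesis by simp
qed

lemma bin_val_split:
  "bin_val b = (\<Sum>i<n. dg b i) + bin_val (\<lambda>i. b (i + n)) / 2 ^ n"
proof -
  have "(\<Sum>i. dg b (i + n)) = bin_val (\<lambda>i. b (i + n)) / 2 ^ n"
    unfolding bin_val_dg
    by (subst suminf_divide[OF summable_dg, symmetric]) (simp add: dg_def power_add field_simps)
  then show ?thesis
    using suminf_split_initial_segment[OF summable_dg, of b n] bin_val_dg by simp
qed

definition val :: "bool list \<Rightarrow> real" where
  "val w = (\<Sum>i<length w. (if w ! i then 1 else 0) / 2 ^ (i + 1))"

definition pre :: "(nat \<Rightarrow> bool) \<Rightarrow> nat \<Rightarrow> bool list" where
  "pre b n = map b [0..<n]"

lemma length_pre[simp]: "length (pre b n) = n" by (simp add: pre_def)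
lemma nth_pre[simp]: "i < n \<Longrightarrow> pre b n ! i = b i" by (simp add: pre_def)
lemma pre_Suc: "pre b (Suc n) = pre b n @ [b n]" by (simp add: pre_def)

lemma val_pre: "val (pre b n) = (\<Sum>i<n. dg b i)"
  by (simp add: val_def dg_def)

lemma val_snoc: "val (w @ [a]) = val w + (if a then 1 else 0) / 2 ^ (length w + 1)"
  by (simp add: val_def nth_append)

lemma val_nonneg: "0 \<le> val w" by (simp add: val_def sum_nonneg)

lemma val_Ints: "val w * 2 ^ length w \<in> \<int>"
proof (induction w rule: rev_induct)
  case Nil then show ?case by (simp add: val_def)
next
  case (snoc a w)
  have "val (w @ [a]) * 2 ^ length (w @ [a]) = 2 * (val w * 2 ^ length w) + (if a then 1 else 0)"
    by (simp add: val_snoc field_simps)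
  then show ?case using snoc by simp
qed

lemma val_sep:
  "length w = length w' \<Longrightarrow> w \<noteq> w' \<Longrightarrow> 1 / 2 ^ length w \<le> \<bar>val w - val w'\<bar>"
proof (induction w arbitrary: w' rule: rev_induct)
  case Nil then show ?case by simp
next
  case (snoc a w)
  obtain w'' a' where w': "w' = w'' @ [a']" using snoc.prems
    by (metis length_0_conv list.distinct(1) rev_exhaust snoc_eq_iff_butlast)
  have len: "length w'' = length w" using snoc.prems w' by simp
  show ?case
  proof (cases "w = w''")
    case True
    then have "a \<noteq> a'" using snoc.prems w' by simp
    then show ?thesis using True w' by (auto simp: val_snoc)
  next
    case False
    have ih: "1 / 2 ^ length w \<le> \<bar>val w - val w''\<bar>" using snoc.IH[OF len[symmetric] False] .
    have "\<bar>(if a then 1 else 0) / 2 ^ (length w + 1) - (if a' then 1 else 0) / 2 ^ (length w + 1)\<bar>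
          \<le> (1::real) / 2 ^ (length w + 1)" by auto
    moreover have "(1::real) / 2 ^ (length w + 1) = 1 / 2 ^ length w - 1 / 2 ^ (length w + 1)"
      by (simp add: field_simps)
    ultimately show ?thesis using ih w' len by (simp add: val_snoc)
  qed
qed

lemma bin_val_pre_bounds:
  "val (pre b n) \<le> bin_val b" "bin_val b \<le> val (pre b n) + 1 / 2 ^ n"
  using bin_val_split[of b n] bin_val_nonneg[of "\<lambda>i. b (i+n)"] bin_val_le1[of "\<lambda>i. b (i+n)"]
  by (auto simp: val_pre divide_right_mono)

lemma bin_val_pre_strict:
  assumes "infinite {i. b i}" shows "val (pre b n) < bin_val b"
proof -
  obtain i where "i \<ge> n" "b i" using assms by (meson infinite_nat_iff_unbounded_le mem_Collect_eq)
  then have "0 < bin_val (\<lambda>i. b (i+n))" by (intro bin_val_pos[of _ "i - n"]) simp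
  then show ?thesis using bin_val_split[of b n] by (simp add: val_pre)
qed

lemma pre_eq_if_close:
  assumes "\<bar>val (pre b n) - val (pre c n)\<bar> < 1 / 2 ^ n" shows "pre b n = pre c n"
  using val_sep[of "pre b n" "pre c n"] assms by force

lemma bin_val_inj:
  assumes "infinite {i. b i}" "infinite {i. c i}" "bin_val b = bin_val c"
  shows "b = c"
proof
  fix i
  have "pre b (Suc i) = pre c (Suc i)"
    apply (rule pre_eq_if_close)
    using bin_val_pre_bounds[of b "Suc i"] bin_val_pre_bounds[of c "Suc i"]
      bin_val_pre_strict[OF assms(1), of "Suc i"] bin_val_pre_strict[OF assms(2), of "Suc i"] assms(3)
    by (simp add: abs_less_iff)
  then show "b i = c i" by (metis lessI nth_pre)
qed

lemma bin_val_zero_tail: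
  assumes "\<forall>i\<ge>N. \<not> b i" shows "bin_val b = val (pre b N)"
proof -
  have "bin_val (\<lambda>i. b (i + N)) = 0" by (simp add: assms bin_val_def)
  then show ?thesis using bin_val_split[of b N] by (simp add: val_pre)
qed

lemma expansion_exists:
  fixes x :: real assumes x: "0 < x" "x \<le> 1"
  shows "\<exists>b. infinite {i. b i} \<and> bin_val b = x"
proof -
  define a where "a N = \<lceil>2 ^ N * x\<rceil> - 1" for N
  have a1: "real_of_int (a N) < 2 ^ N * x" for N unfolding a_def by linarith
  have a2: "2 ^ N * x \<le> real_of_int (a N) + 1" for N unfolding a_def by linarith
  have a0: "a 0 = 0" using x unfolding a_def by simp linarith
  have astep: "a (Suc N) = 2 * a N \<or> a (Suc N) = 2 * a N + 1" for N
  proof -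
    have "real_of_int (a (Suc N)) < 2 * (2 ^ N * x)" "2 * (2 ^ N * x) \<le> real_of_int (a (Suc N)) + 1"
      using a1[of "Suc N"] a2[of "Suc N"] by simp_all
    then have "real_of_int (a (Suc N)) < 2 * real_of_int (a N) + 2"
      "2 * real_of_int (a N) < real_of_int (a (Suc N)) + 1"
      using a1[of N] a2[of N] by linarith+
    then have "a (Suc N) < 2 * a N + 2" "2 * a N < a (Suc N) + 1" by linarith+
    then show ?thesis by linarith
  qed
  define b where "b n = odd (a (Suc n))" for n
  have bstep: "real_of_int (a (Suc n)) = 2 * a n + (if b n then 1 else 0)" for n
    using astep[of n] unfolding b_def by auto
  have ps: "(\<Sum>i<N. dg b i) = a N / 2 ^ N" for N
  proof (induction N)
    case 0 then show ?case by (simp add: a0)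
  next
    case (Suc N)
    then show ?case by (simp add: dg_def bstep field_simps)
  qed
  have lim: "(\<lambda>N. real_of_int (a N) / 2 ^ N) \<longlonglongrightarrow> x"
  proof (rule tendsto_sandwich[of "\<lambda>N. x - (1/2)^N" _ _ "\<lambda>N. x"])
    show "\<forall>\<^sub>F N in sequentially. x - (1/2)^N \<le> real_of_int (a N) / 2 ^ N"
    proof (intro always_eventually allI)
      fix N
      have "x \<le> (real_of_int (a N) + 1) / 2 ^ N" using a2[of N] by (simp add: field_simps)
      then show "x - (1/2)^N \<le> real_of_int (a N) / 2 ^ N" by (simp add: power_divide add_divide_distrib)
    qed
    show "\<forall>\<^sub>F N in sequentially. real_of_int (a N) / 2 ^ N \<le> x"
      using a1 by (auto simp: field_simps less_imp_le)
    show "(\<lambda>N. x - (1/2::real)^N) \<longlonglongrightarrow> x"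
      by (intro tendsto_eq_intros LIMSEQ_power_zero) auto
  qed auto
  have sums: "dg b sums x" unfolding sums_def using lim ps by simp
  then have bv: "bin_val b = x" using bin_val_dg sums_unique by metis
  have "infinite {i. b i}"
  proof
    assume "finite {i. b i}"
    then obtain N where "\<forall>i\<ge>N. \<not> b i"
      by (metis finite_nat_set_iff_bounded_le mem_Collect_eq not_less_eq_eq)
    then have "bin_val b = a N / 2 ^ N" using bin_val_zero_tail ps val_pre by metis
    then show False using a1[of N] bv by (simp add: field_simps)
  qed
  then show ?thesis using bv by blast
qed

lemma beta_eq:
  assumes "infinite {i. b i}" shows "beta (bin_val b) = b"
  unfolding beta_def
  by (rule the_equality) (use assms bin_val_inj in auto)

lemma beta_props:
  assumes "0 < x" "x \<le> 1" shows "infinite {i. beta x i}" "bin_val (beta x) = x"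
  using expansion_exists[OF assms] beta_eq by metis+

lemma dyadic_tail:
  assumes inf: "infinite {i. b i}" and eq: "bin_val b = real_of_int k / 2 ^ N"
  shows "\<forall>i\<ge>N. b i"
proof -
  define t where "t = bin_val (\<lambda>i. b (i + N))"
  obtain i where "i \<ge> N" "b i" using inf by (meson infinite_nat_iff_unbounded_le mem_Collect_eq)
  then have tpos: "0 < t" unfolding t_def by (intro bin_val_pos[of _ "i - N"]) simp
  have tle: "t \<le> 1" unfolding t_def by (rule bin_val_le1)
  have "t = real_of_int k - val (pre b N) * 2 ^ N"
    using bin_val_split[of b N] eq unfolding t_def val_pre[symmetric] by (simp add: field_simps)
  then have "t \<in> \<int>" using val_Ints[of "pre b N"] by simp
  then obtain m where "t = real_of_int m" by (auto elim: Ints_cases)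
  with tpos tle have "t = 1" by (metis of_int_0_less_iff of_int_le_1_iff zless_imp_add1_zle  of_int_1 order_antisym add_0)
  show ?thesis
  proof (intro allI impI)
    fix j assume "N \<le> j"
    show "b j"
    proof (rule ccontr)
      assume "\<not> b j"
      then have "t < 1" unfolding t_def by (intro bin_val_lt1[of _ "j - N"]) (use \<open>N \<le> j\<close> in simp)
      with \<open>t = 1\<close> show False by simp
    qed
  qed
qed

definition cnt :: "(nat \<Rightarrow> bool) \<Rightarrow> nat \<Rightarrow> nat" where
  "cnt b n = card {i. i < n \<and> b i}"

definition ok :: "(nat \<Rightarrow> bool) \<Rightarrow> nat \<Rightarrow> bool" where
  "ok b n \<longleftrightarrow> (b n \<longrightarrow> cnt b n < n \<and> b (cnt b n) = odd n)"

definition Vs :: "(nat \<Rightarrow> bool) \<Rightarrow> bool" where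
  "Vs b \<longleftrightarrow> (\<forall>n. ok b n)"

definition SS :: "(nat \<Rightarrow> bool) set" where
  "SS = {b. infinite {i. b i} \<and> Vs b}"

lemma cnt_cong: "(\<And>i. i < n \<Longrightarrow> b i = c i) \<Longrightarrow> cnt b n = cnt c n"
  unfolding cnt_def by (rule arg_cong[where f=card]) auto

lemma ok_cong: "(\<And>i. i \<le> n \<Longrightarrow> b i = c i) \<Longrightarrow> ok b n = ok c n"
proof -
  assume h: "\<And>i. i \<le> n \<Longrightarrow> b i = c i"
  then have "cnt b n = cnt c n" by (intro cnt_cong) auto
  then show ?thesis unfolding ok_def using h by (metis le_refl less_imp_le)
qed

lemma cnt_le: "cnt b n \<le> n"
  unfolding cnt_def by (metis (no_types, lifting) card_lessThan card_mono finite_lessThan lessThan_iff mem_Collect_eq subsetI)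

lemma cnt_enum:
  assumes inf: "infinite {i. b i}" shows "cnt b (enumerate {i. b i} k) = k"
proof -
  let ?S = "{i. b i}"
  have "{i. i < enumerate ?S k \<and> b i} = enumerate ?S ` {..<k}"
  proof
    show "{i. i < enumerate ?S k \<and> b i} \<subseteq> enumerate ?S ` {..<k}"
    proof
      fix i assume "i \<in> {i. i < enumerate ?S k \<and> b i}"
      then obtain j where "enumerate ?S j = i" "i < enumerate ?S k"
        using enumerate_Ex[OF inf] by auto
      then show "i \<in> enumerate ?S ` {..<k}" using inf by auto
    qed
    show "enumerate ?S ` {..<k} \<subseteq> {i. i < enumerate ?S k \<and> b i}"
      using inf enumerate_in_set[OF inf] by auto
  qed
  then show ?thesis unfolding cnt_def
    by (simp add: card_image inj_on_subset[OF inj_enumerate[OF inf]])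
qed

lemma rho_eq_iff:
  assumes inf: "infinite {i. b i}" shows "rho b = b \<longleftrightarrow> Vs b"
proof
  let ?S = "{i. b i}"
  assume r: "rho b = b"
  have nb0: "\<not> b 0"
  proof
    assume "b 0"
    then have "enumerate ?S 0 = 0" by (simp add: enumerate_0 Least_eq_0)
    then have "rho b 0 = False" by (simp add: rho_def)
    with r \<open>b 0\<close> show False by simp
  qed
  show "Vs b" unfolding Vs_def ok_def
  proof (intro allI impI)
    fix n assume bn: "b n"
    then obtain k where k: "enumerate ?S k = n" using enumerate_Ex[OF inf] by auto
    have ck: "cnt b n = k" using cnt_enum[OF inf, of k] k by simp
    have "b k = odd n" using r k by (metis rho_def)
    moreover have "cnt b n < n"
    proof -
      have "n \<noteq> 0" using nb0 bn by (cases n) auto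
      have "{i. i < n \<and> b i} \<subseteq> {1..<n}" using nb0 by (auto simp: Suc_le_eq) (metis gr0I)
      then have "cnt b n \<le> n - 1" unfolding cnt_def by (metis card_atLeastLessThan card_mono finite_atLeastLessThan)
      then show ?thesis using \<open>n \<noteq> 0\<close> by linarith
    qed
    ultimately show "cnt b n < n \<and> b (cnt b n) = odd n" using ck by simp
  qed
next
  let ?S = "{i. b i}"
  assume v: "Vs b"
  show "rho b = b"
  proof
    fix k
    define n where "n = enumerate ?S k"
    have bn: "b n" using enumerate_in_set[OF inf] n_def by auto
    have "cnt b n = k" using cnt_enum[OF inf] n_def by simp
    then have "b k = odd n" using v bn unfolding Vs_def ok_def by metis
    then show "rho b k = b k" by (simp add: rho_def n_def)
  qed
qed

lemma SS_not_eventually_ones: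
  assumes "b \<in> SS" shows "\<not> (\<forall>i\<ge>N. b i)"
proof
  assume ev: "\<forall>i\<ge>N. b i"
  have v: "Vs b" using assms by (simp add: SS_def)
  define n where "n = 2 * N"
  have "{i. i < n \<and> b i} \<supseteq> {N..<n}" using ev by auto
  then have "n - N \<le> cnt b n" unfolding cnt_def
    by (metis (no_types, lifting) card_atLeastLessThan card_mono finite_nat_set_iff_bounded mem_Collect_eq)
  then have c1: "N \<le> cnt b n" by (simp add: n_def)
  have bn: "b n" "b (Suc n)" using ev n_def by auto
  have cs: "cnt b (Suc n) = Suc (cnt b n)"
  proof -
    have "{i. i < Suc n \<and> b i} = insert n {i. i < n \<and> b i}" using bn by auto
    then show ?thesis unfolding cnt_def by simp
  qed
  have "b (cnt b n) = odd n" using v bn unfolding Vs_def ok_def by blast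
  moreover have "b (cnt b (Suc n)) = odd (Suc n)" using v bn unfolding Vs_def ok_def by blast
  ultimately show False using ev c1 cs by auto
qed

lemma FixR_eq: "FixR = bin_val ` SS"
proof
  show "bin_val ` SS \<subseteq> FixR"
  proof
    fix x assume "x \<in> bin_val ` SS"
    then obtain b where b: "b \<in> SS" "x = bin_val b" by auto
    have inf: "infinite {i. b i}" using b by (simp add: SS_def)
    obtain i where "b i" using inf by (metis Collect_empty_eq finite.emptyI)
    then have xpos: "0 < x" using b bin_val_pos by blast
    have "R x = bin_val (rho (beta x))" using xpos by (simp add: R_def)
    also have "\<dots> = x" using beta_eq[OF inf] rho_eq_iff[OF inf] b by (simp add: SS_def)
    finally show "x \<in> FixR" using xpos b bin_val_le1 by (simp add: FixR_def)
  qed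
next
  show "FixR \<subseteq> bin_val ` SS"
  proof
    fix x assume "x \<in> FixR"
    then have x01: "0 \<le> x" "x \<le> 1" and rx: "R x = x" by (auto simp: FixR_def)
    have "x \<noteq> 0" using rx by (auto simp: R_def)
    with x01 have xpos: "0 < x" by simp
    define b where "b = beta x"
    have inf: "infinite {i. b i}" and bv: "bin_val b = x" using beta_props[OF xpos x01(2)] b_def by auto
    define c where "c = rho b"
    have cv: "bin_val c = x" using rx xpos by (simp add: R_def c_def b_def)
    have infc: "infinite {i. c i}"
    proof
      assume "finite {i. c i}"
      then obtain N where N: "\<forall>i\<ge>N. \<not> c i"
        by (metis finite_nat_set_iff_bounded_le mem_Collect_eq not_less_eq_eq)
      have "val (pre c N) * 2 ^ N \<in> \<int>" using val_Ints[of "pre c N"] by simp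
      then obtain k where k: "val (pre c N) * 2 ^ N = real_of_int k" by (auto elim: Ints_cases)
      have "bin_val b = real_of_int k / 2 ^ N"
        using bin_val_zero_tail[OF N] cv bv k by (simp add: field_simps)
      then have ev: "\<forall>i\<ge>N. b i" by (rule dyadic_tail[OF inf])
      let ?S = "{i. b i}"
      have "{n. N \<le> n \<and> odd n} \<subseteq> enumerate ?S ` {k. c k}"
      proof
        fix n assume n: "n \<in> {n. N \<le> n \<and> odd n}"
        then have "b n" using ev by auto
        then obtain j where j: "enumerate ?S j = n" using enumerate_Ex[OF inf] by auto
        then have "c j" using n by (simp add: c_def rho_def)
        then show "n \<in> enumerate ?S ` {k. c k}" using j by auto
      qed
      moreover have "infinite {n. N \<le> n \<and> odd n}"
      proof -
        have "{n. N \<le> n \<and> odd n} \<supseteq> (\<lambda>m. 2 * (N + m) + 1) ` UNIV" by auto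
        moreover have "infinite ((\<lambda>m::nat. 2 * (N + m) + 1) ` UNIV)"
          by (rule range_inj_infinite) (auto simp: inj_on_def)
        ultimately show ?thesis using infinite_super by blast
      qed
      ultimately show False using \<open>finite {i. c i}\<close> by (metis finite_imageI infinite_super)
    qed
    have "c = b" using bin_val_inj[OF infc inf] cv bv by simp
    then have "Vs b" using rho_eq_iff[OF inf] c_def by simp
    then show "x \<in> bin_val ` SS" using inf bv by (auto simp: SS_def)
  qed
qed

lemma FixR_dyadic: "FixR \<inter> dyadic = {}"
proof (rule ccontr)
  assume "FixR \<inter> dyadic \<noteq> {}"
  then obtain x where x: "x \<in> FixR" "x \<in> dyadic" by auto
  then obtain b where b: "b \<in> SS" "x = bin_val b" using FixR_eq by auto
  obtain k N where "x = real_of_int k / 2 ^ N" using x(2) by (auto simp: dyadic_def)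
  then have "\<forall>i\<ge>N. b i" using dyadic_tail b by (auto simp: SS_def)
  then show False using SS_not_eventually_ones[OF b(1)] by blast
qed

definition vl :: "bool list \<Rightarrow> bool" where
  "vl w \<longleftrightarrow> (\<forall>n<length w. ok (\<lambda>i. w ! i) n)"

definition nxt :: "bool list \<Rightarrow> bool" where
  "nxt xs \<longleftrightarrow> cnt (\<lambda>i. xs ! i) (length xs) < length xs \<and> xs ! cnt (\<lambda>i. xs ! i) (length xs) = odd (length xs)"

lemma cnt_pre: "cnt (\<lambda>i. pre b n ! i) n = cnt b n"
  by (rule cnt_cong) simp

lemma nxt_pre: "nxt (pre b n) \<longleftrightarrow> cnt b n < n \<and> b (cnt b n) = odd n"
  unfolding nxt_def by (auto simp: cnt_pre)

lemma ok_iff: "ok b n \<longleftrightarrow> (b n \<longrightarrow> nxt (pre b n))"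
  by (simp add: ok_def nxt_pre)

lemma vl_pre: "vl (pre b n) \<longleftrightarrow> (\<forall>i<n. ok b i)"
proof -
  have "ok (\<lambda>j. pre b n ! j) i = ok b i" if "i < n" for i
    by (rule ok_cong) (use that in simp)
  then show ?thesis unfolding vl_def by auto
qed

lemma pre_nth: "pre (\<lambda>i. w ! i) (length w) = w"
  by (simp add: pre_def map_nth)

lemma vl_snoc: "vl (w @ [a]) \<longleftrightarrow> vl w \<and> (a \<longrightarrow> nxt w)"
proof -
  define f where "f i = (w @ [a]) ! i" for i
  have e1: "pre f (Suc (length w)) = w @ [a]" by (rule nth_equalityI) (simp_all add: f_def nth_append)
  have e2: "pre f (length w) = w" by (rule nth_equalityI) (simp_all add: f_def nth_append)
  have "vl (pre f (Suc (length w))) \<longleftrightarrow> vl (pre f (length w)) \<and> ok f (length w)"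
    unfolding vl_pre by (auto simp: less_Suc_eq)
  moreover have "ok f (length w) \<longleftrightarrow> (a \<longrightarrow> nxt w)" unfolding ok_iff e2 by (simp add: f_def)
  ultimately show ?thesis using e1 e2 by simp
qed

lemma cnt_lt: "\<not> b 0 \<Longrightarrow> 0 < n \<Longrightarrow> cnt b n < n"
proof -
  assume nb0: "\<not> b 0" and n: "0 < n"
  have "{i. i < n \<and> b i} \<subseteq> {1..<n}" using nb0 by (auto simp: Suc_le_eq intro!: gr0I)
  then have "cnt b n \<le> n - 1" unfolding cnt_def by (metis card_atLeastLessThan card_mono finite_atLeastLessThan)
  then show ?thesis using n by linarith
qed

lemma cnt_Suc: "cnt b (Suc n) = cnt b n + (if b n then 1 else 0)"
proof -
  have "{i. i < Suc n \<and> b i} = (if b n then insert n {i. i < n \<and> b i} else {i. i < n \<and> b i})"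
    by (auto simp: less_Suc_eq)
  then show ?thesis unfolding cnt_def by simp
qed

lemma nxt_not_both: "\<not> (nxt w \<and> nxt (w @ [False]))"
proof
  assume h: "nxt w \<and> nxt (w @ [False])"
  define f where "f i = (w @ [False]) ! i" for i
  have e1: "pre f (Suc (length w)) = w @ [False]" by (rule nth_equalityI) (simp_all add: f_def nth_append)
  have e2: "pre f (length w) = w" by (rule nth_equalityI) (simp_all add: f_def nth_append)
  have c: "cnt f (Suc (length w)) = cnt f (length w)" by (simp add: cnt_Suc f_def)
  have "cnt f (length w) < length w" "f (cnt f (length w)) = odd (length w)"
    using h e2 nxt_pre[of f "length w"] by auto
  moreover have "f (cnt f (length w)) = odd (Suc (length w))"
    using h e1 nxt_pre[of f "Suc (length w)"] c by auto
  ultimately show False by simp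
qed

lemma vl_hd: "vl w \<Longrightarrow> 0 < length w \<Longrightarrow> \<not> w ! 0"
  unfolding vl_def ok_def by auto

lemma nxt_one: "vl w \<Longrightarrow> w \<noteq> [] \<Longrightarrow> nxt w \<or> nxt (w @ [False])"
proof -
  assume v: "vl w" "w \<noteq> []"
  define f where "f i = (w @ [False]) ! i" for i
  have e1: "pre f (Suc (length w)) = w @ [False]" by (rule nth_equalityI) (simp_all add: f_def nth_append)
  have e2: "pre f (length w) = w" by (rule nth_equalityI) (simp_all add: f_def nth_append)
  have c: "cnt f (Suc (length w)) = cnt f (length w)" by (simp add: cnt_Suc f_def)
  have f0: "\<not> f 0" using vl_hd[OF v(1)] v(2) by (simp add: f_def nth_append)
  have lt: "cnt f (length w) < length w" using cnt_lt[of f, OF f0] v(2) by simp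
  have "f (cnt f (length w)) = odd (length w) \<or> f (cnt f (length w)) = odd (Suc (length w))" by auto
  then show ?thesis using nxt_pre[of f "length w"] nxt_pre[of f "Suc (length w)"] e1 e2 c lt by auto
qed

fun gl :: "bool list \<Rightarrow> nat \<Rightarrow> bool list" where
  "gl v 0 = v"
| "gl v (Suc k) = gl v k @ [nxt (gl v k)]"

definition G :: "bool list \<Rightarrow> nat \<Rightarrow> bool" where
  "G v i = gl v (Suc i) ! i"

lemma length_gl[simp]: "length (gl v k) = length v + k"
  by (induction k) auto

lemma gl_mono: "k \<le> k' \<Longrightarrow> i < length v + k \<Longrightarrow> gl v k' ! i = gl v k ! i"
proof (induction k' rule: dec_induct)
  case base then show ?case by simp
next
  case (step k') then show ?case by (simp add: nth_append)
qed

lemma G_gl: "i < length v + k \<Longrightarrow> G v i = gl v k ! i"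
  unfolding G_def by (metis gl_mono add_Suc_right le_add2 less_Suc_eq_le nat_le_linear not_less_eq_eq trans_le_add2)

lemma pre_G: "pre (G v) (length v + k) = gl v k"
  by (rule nth_equalityI) (simp_all add: G_gl)

lemma G_low: "i < length v \<Longrightarrow> G v i = v ! i"
  using G_gl[of i v 0] by simp

lemma G_high: "G v (length v + k) = nxt (pre (G v) (length v + k))"
  using G_gl[of "length v + k" v "Suc k"] by (simp add: pre_G nth_append)

lemma Vs_G: assumes "vl v" shows "Vs (G v)"
  unfolding Vs_def
proof
  fix n
  show "ok (G v) n"
  proof (cases "n < length v")
    case True
    have "ok (\<lambda>i. v ! i) n" using assms True by (simp add: vl_def)
    moreover have "ok (G v) n = ok (\<lambda>i. v ! i) n" by (rule ok_cong) (use True in \<open>simp add: G_low\<close>)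
    ultimately show ?thesis by simp
  next
    case False
    then obtain k where "n = length v + k" by (metis le_Suc_ex not_less)
    then show ?thesis using G_high ok_iff by metis
  qed
qed

lemma inf_G: assumes "vl v" "v \<noteq> []" shows "infinite {i. G v i}"
  unfolding infinite_nat_iff_unbounded_le
proof
  fix m
  define i where "i = length v + m"
  have vp: "vl (pre (G v) i)" using Vs_G[OF assms(1)] by (simp add: vl_pre Vs_def)
  have ne: "pre (G v) i \<noteq> []" using assms(2) by (metis i_def length_0_conv length_pre add_is_0)
  have "G v i \<or> G v (Suc i)"
  proof (cases "G v i")
    case False
    have "nxt (pre (G v) i) \<or> nxt (pre (G v) i @ [False])" by (rule nxt_one[OF vp ne])
    moreover have "G v i = nxt (pre (G v) i)" using G_high i_def by simp
    moreover have "G v (Suc i) = nxt (pre (G v) (Suc i))" using G_high[of v "Suc m"] i_def by simp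
    ultimately show ?thesis using False by (simp add: pre_Suc)
  qed simp
  then show "\<exists>n\<ge>m. n \<in> {i. G v i}" using i_def by (metis le_add2 le_Suc_eq mem_Collect_eq)
qed

lemma G_SS: "vl v \<Longrightarrow> v \<noteq> [] \<Longrightarrow> G v \<in> SS"
  using Vs_G inf_G by (simp add: SS_def)

lemma G_ext: "pre (G (w @ x)) (length w) = w"
  by (rule nth_equalityI) (simp_all add: G_low nth_append)

lemma G_dist: assumes "nxt v" shows "G v \<noteq> G (v @ [False])"
proof -
  have "G v (length v) = True" using G_high[of v 0] pre_G[of v 0] assms by simp
  moreover have "G (v @ [False]) (length v) = False" by (simp add: G_low)
  ultimately show ?thesis by metis
qed

lemma two_ext:
  assumes "vl w" "w \<noteq> []"
  shows "\<exists>c1 c2. c1 \<in> SS \<and> c2 \<in> SS \<and> c1 \<noteq> c2 \<and> pre c1 (length w) = w \<and> pre c2 (length w) = w"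
proof -
  define u where "u = w @ [False]"
  have vu: "vl u" "u \<noteq> []" using assms by (simp_all add: u_def vl_snoc)
  have vu2: "vl (u @ [False])" "u @ [False] \<noteq> []" using vu by (simp_all add: vl_snoc)
  have vu3: "vl (u @ [False] @ [False])" using vu2 vl_snoc[of "u @ [False]"] by simp
  consider "nxt u" | "nxt (u @ [False])" using nxt_one[OF vu] by blast
  then show ?thesis
  proof cases
    case 1
    show ?thesis
      apply (rule exI[of _ "G u"], rule exI[of _ "G (u @ [False])"])
      using G_SS[OF vu] G_SS[OF vu2] G_dist[OF 1] G_ext[of w "[False]"] G_ext[of w "[False,False]"]
      by (simp add: u_def)
  next
    case 2
    show ?thesis
      apply (rule exI[of _ "G (u @ [False])"], rule exI[of _ "G (u @ [False] @ [False])"])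
      using G_SS[OF vu2] G_SS[OF vu3] G_dist[OF 2] G_ext[of w "[False,False]"] G_ext[of w "[False,False,False]"]
      by (simp add: u_def)
  qed
qed

lemma SS_nonempty: "SS \<noteq> {}"
proof -
  have "vl [False]" by (simp add: vl_def ok_def)
  then show ?thesis using G_SS by blast
qed

definition VL :: "nat \<Rightarrow> bool list set" where
  "VL n = {w. length w = n \<and> vl w}"

lemma finite_VL: "finite (VL n)"
proof -
  have "finite {xs. set xs \<subseteq> (UNIV::bool set) \<and> length xs = n}"
    by (rule finite_lists_length_eq) simp
  then show ?thesis by (rule finite_subset[rotated]) (auto simp: VL_def)
qed

definition E :: "bool list \<Rightarrow> bool list set" where
  "E w = (if nxt w then {w @ [False, False], w @ [True, False], w @ [True, True]}
          else {w @ [False, False], w @ [False, True]})"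

lemma card3: "card {a, b, c} \<le> 3"
  by (rule card_insert_le_m1, simp, rule card_insert_le_m1, simp, rule card_insert_le_m1, simp_all)

lemma card2: "card {a, b} \<le> 3"
  by (rule card_insert_le_m1, simp, rule card_insert_le_m1, simp_all)

lemma card_E: "card (E w) \<le> 3"
  unfolding E_def by (cases "nxt w") (simp_all only: if_True if_False card3 card2)

lemma VL_sub: "VL (Suc (Suc n)) \<subseteq> (\<Union>w\<in>VL n. E w)"
proof
  fix u assume "u \<in> VL (Suc (Suc n))"
  then have lu: "length u = Suc (Suc n)" and vu: "vl u" by (auto simp: VL_def)
  obtain w' c where u1: "u = w' @ [c]" using lu by (cases u rule: rev_exhaust) auto
  obtain w a where u2: "w' = w @ [a]" using lu u1 by (cases w' rule: rev_exhaust) auto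
  have u: "u = w @ [a, c]" using u1 u2 by simp
  have lw: "length w = n" using lu u by simp
  have vw': "vl w'" and cn: "c \<longrightarrow> nxt (w @ [a])" using vu u1 u2 vl_snoc[of w' c] by simp_all
  have vw: "vl w" and an: "a \<longrightarrow> nxt w" using vw' u2 vl_snoc[of w a] by simp_all
  have "u \<in> E w"
  proof (cases "nxt w")
    case True
    then have "\<not> (\<not> a \<and> c)" using cn nxt_not_both[of w] by auto
    then have "[a, c] \<in> {[False, False], [True, False], [True, True]}" by (cases a; cases c) simp_all
    then show ?thesis using True u unfolding E_def by auto
  next
    case False
    then have "[a, c] \<in> {[False, False], [False, True]}" using an by (cases a; cases c) simp_all
    then show ?thesis using False u unfolding E_def by auto
  qed
  then show "u \<in> (\<Union>w\<in>VL n. E w)" using lw vw by (auto simp: VL_def)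
qed

lemma card_VL_step: "card (VL (Suc (Suc n))) \<le> 3 * card (VL n)"
proof -
  have "card (VL (Suc (Suc n))) \<le> card (\<Union>w\<in>VL n. E w)"
    by (rule card_mono[OF _ VL_sub]) (auto simp: finite_VL E_def)
  also have "\<dots> \<le> (\<Sum>w\<in>VL n. card (E w))" by (rule card_UN_le[OF finite_VL])
  also have "\<dots> \<le> (\<Sum>w\<in>VL n. 3)" by (rule sum_mono) (rule card_E)
  also have "\<dots> = 3 * card (VL n)" by (simp only: sum_constant of_nat_id mult.commute)
  finally show ?thesis .
qed

lemma card_VL: "card (VL (2 * k)) \<le> 3 ^ k"
proof (induction k)
  case 0
  have "VL 0 = {[]}" by (auto simp: VL_def vl_def)
  then show ?case by simp
next
  case (Suc k)
  have e: "2 * Suc k = Suc (Suc (2 * k))" by simp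
  have "card (VL (2 * Suc k)) \<le> 3 * card (VL (2 * k))" unfolding e by (rule card_VL_step)
  also have "\<dots> \<le> 3 * 3 ^ k" using Suc by (rule mult_le_mono2)
  finally show ?case by (simp only: power_Suc)
qed

definition Cn :: "nat \<Rightarrow> real set" where
  "Cn n = (\<Union>w\<in>VL n. {val w .. val w + 1 / 2 ^ n})"

lemma closed_Cn: "closed (Cn n)"
  unfolding Cn_def by (rule closed_UN[OF finite_VL]) auto

lemma pre_VL: "b \<in> SS \<Longrightarrow> pre b n \<in> VL n"
  by (simp add: VL_def vl_pre SS_def Vs_def)

lemma Fix_Cn: "FixR \<subseteq> Cn n"
proof
  fix x assume "x \<in> FixR"
  then obtain b where b: "b \<in> SS" "x = bin_val b" using FixR_eq by auto
  then show "x \<in> Cn n" unfolding Cn_def using pre_VL[OF b(1), of n] bin_val_pre_bounds[of b n] by auto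
qed

lemma closure_Cn: "closure FixR \<subseteq> Cn n"
  by (rule closure_minimal[OF Fix_Cn closed_Cn])

lemma em_Cn: "emeasure lborel (Cn n) \<le> ennreal (real (card (VL n)) / 2 ^ n)"
proof -
  have "emeasure lborel (Cn n) \<le> (\<Sum>w\<in>VL n. emeasure lborel {val w .. val w + 1 / 2 ^ n})"
    unfolding Cn_def by (rule emeasure_subadditive_finite[OF finite_VL]) auto
  also have "\<dots> = (\<Sum>w\<in>VL n. ennreal (1 / 2 ^ n))" by simp
  also have "\<dots> = ennreal (\<Sum>w\<in>VL n. 1 / 2 ^ n)" by (rule sum_ennreal) simp
  also have "\<dots> = ennreal (real (card (VL n)) / 2 ^ n)" by simp
  finally show ?thesis .
qed

lemma small_pow: assumes "0 < (e::real)" "0 \<le> q" "q < 1" shows "\<exists>n\<ge>1. q ^ n < e"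
proof -
  have "(\<lambda>n. q ^ n) \<longlonglongrightarrow> 0" using assms by (intro LIMSEQ_power_zero) simp
  then have "\<forall>\<^sub>F n in sequentially. q ^ n < e" using assms(1) by (rule order_tendstoD(2))
  then obtain N where N: "\<And>n. N \<le> n \<Longrightarrow> q ^ n < e" unfolding eventually_sequentially by blast
  have "q ^ Suc N < e" by (rule N) simp
  moreover have "1 \<le> Suc N" by simp
  ultimately show ?thesis by blast
qed

lemma closure_null: "closure FixR \<in> null_sets lborel"
proof
  have bnd: "emeasure lborel (closure FixR) \<le> ennreal ((3/4) ^ k)" for k
  proof -
    have "emeasure lborel (closure FixR) \<le> emeasure lborel (Cn (2 * k))"
      by (rule emeasure_mono[OF closure_Cn]) (simp add: closed_Cn borel_closed)
    also have "\<dots> \<le> ennreal (real (card (VL (2 * k))) / 2 ^ (2 * k))" by (rule em_Cn)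
    also have "\<dots> \<le> ennreal ((3/4) ^ k)"
    proof (rule ennreal_leI)
      have "real (card (VL (2 * k))) \<le> 3 ^ k" using card_VL[of k] by (metis of_nat_le_iff of_nat_numeral of_nat_power)
      then have "real (card (VL (2 * k))) / 2 ^ (2 * k) \<le> 3 ^ k / 4 ^ k"
        by (simp add: power_mult divide_right_mono)
      then show "real (card (VL (2 * k))) / 2 ^ (2 * k) \<le> (3/4) ^ k" by (simp add: power_divide)
    qed
    finally show ?thesis .
  qed
  have "emeasure lborel (closure FixR) \<le> 0"
  proof (rule ennreal_le_epsilon)
    fix e :: real assume "0 < e"
    then obtain k where "(3/4::real) ^ k < e" using small_pow[of e "3/4"] by auto
    then have "emeasure lborel (closure FixR) \<le> ennreal e"
      using bnd[of k] by (meson ennreal_leI less_imp_le order_trans)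
    then show "emeasure lborel (closure FixR) \<le> 0 + ennreal e" by simp
  qed
  then show "emeasure lborel (closure FixR) = 0" by simp
  show "closure FixR \<in> sets lborel" by (simp add: borel_closed)
qed

lemma closure_01: "closure FixR \<subseteq> {0..1}"
  by (rule closure_minimal) (auto simp: FixR_def)

lemma closure_minus: "closure FixR - FixR \<subseteq> dyadic"
proof
  fix x assume x: "x \<in> closure FixR - FixR"
  show "x \<in> dyadic"
  proof (rule ccontr)
    assume nd: "x \<notin> dyadic"
    have x01: "0 \<le> x" "x \<le> 1" using x closure_01 by auto
    have nd': "x \<noteq> real_of_int k / 2 ^ n" for k n using nd x01 by (auto simp: dyadic_def)
    have "x \<noteq> 0" using nd x01 by (auto simp: dyadic_def intro!: exI[of _ 0] exI[of _ "0::nat"])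
    with x01 have xpos: "0 < x" by simp
    define b where "b = beta x"
    have inf: "infinite {i. b i}" and bv: "bin_val b = x" using beta_props[OF xpos x01(2)] b_def by auto
    have "vl (pre b n)" for n
    proof -
      have "x \<in> Cn n" using x closure_Cn by auto
      then obtain w where w: "w \<in> VL n" "val w \<le> x" "x \<le> val w + 1 / 2 ^ n" by (auto simp: Cn_def)
      have lw: "length w = n" using w by (simp add: VL_def)
      obtain k where k: "val w * 2 ^ n = real_of_int k" using val_Ints[of w] lw by (auto elim: Ints_cases)
      have "x \<noteq> val w"
      proof
        assume "x = val w"
        then have "x = real_of_int k / 2 ^ n" using k by (simp add: field_simps)
        then show False using nd' by blast
      qed
      moreover have "x \<noteq> val w + 1 / 2 ^ n"
      proof
        assume "x = val w + 1 / 2 ^ n"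
        then have "x = real_of_int (k + 1) / 2 ^ n" using k by (simp add: field_simps)
        then show False using nd' by blast
      qed
      moreover have "val (pre b n) < x" "x \<le> val (pre b n) + 1 / 2 ^ n"
        using bin_val_pre_strict[OF inf, of n] bin_val_pre_bounds(2)[of b n] bv by auto
      ultimately have "\<bar>val w - val (pre b n)\<bar> < 1 / 2 ^ n" using w by (simp add: abs_less_iff)
      then have "w = pre b n" using val_sep[of w "pre b n"] lw by force
      then show ?thesis using w by (simp add: VL_def)
    qed
    then have "Vs b" unfolding Vs_def by (metis lessI vl_pre)
    then have "x \<in> FixR" using FixR_eq inf bv by (auto simp: SS_def)
    then show False using x by simp
  qed
qed

lemma Fix_limpt: assumes "x \<in> FixR" shows "x islimpt FixR"
  unfolding islimpt_approachable
proof (intro allI impI)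
  fix e :: real assume e: "0 < e"
  obtain b where b: "b \<in> SS" "x = bin_val b" using assms FixR_eq by auto
  obtain n where n: "n \<ge> 1" "(1/2::real) ^ n < e" using small_pow[OF e, of "1/2"] by auto
  define w where "w = pre b n"
  have vw1: "vl w" using pre_VL[OF b(1), of n] by (simp add: VL_def w_def)
  have "length w = n" by (simp add: w_def)
  then have vw2: "w \<noteq> []" using n(1) by auto
  note vw = vw1 vw2
  obtain c1 c2 where c: "c1 \<in> SS" "c2 \<in> SS" "c1 \<noteq> c2" "pre c1 n = w" "pre c2 n = w"
    using two_ext[OF vw] w_def by auto
  obtain c where cc: "c \<in> SS" "c \<noteq> b" "pre c n = w" using c by metis
  have "bin_val c \<noteq> bin_val b" using bin_val_inj cc b by (auto simp: SS_def)
  moreover have "dist (bin_val c) x \<le> 1 / 2 ^ n"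
    using bin_val_pre_bounds[of c n] bin_val_pre_bounds[of b n] cc b w_def
    by (auto simp: dist_real_def abs_le_iff)
  ultimately show "\<exists>x'\<in>FixR. x' \<noteq> x \<and> dist x' x < e"
    using cc b n(2) FixR_eq by (intro bexI[of _ "bin_val c"]) (auto simp: power_divide)
qed

lemma closure_limpt: "x \<in> closure FixR \<Longrightarrow> x islimpt closure FixR"
  by (metis Fix_limpt UnE closure_def closure_subset islimpt_subset mem_Collect_eq)

lemma FixR_nonempty: "FixR \<noteq> {}" using SS_nonempty FixR_eq by auto

lemma closure_uncountable: "uncountable (closure FixR)"
proof
  define K where "K = closure FixR"
  assume "countable (closure FixR)"
  then have cK: "countable K" by (simp add: K_def)
  define \<G> where "\<G> = (\<lambda>a. K - {a}) ` K"
  have dense: "openin (top_of_set K) T \<and> K \<subseteq> closure T" if "T \<in> \<G>" for T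
  proof -
    obtain a where a: "a \<in> K" "T = K - {a}" using \<open>T \<in> \<G>\<close> unfolding \<G>_def by blast
    have "openin (top_of_set K) (K - {a})" by (rule openin_delete) (rule openin_subtopology_self)
    moreover have "K \<subseteq> closure (K - {a})"
    proof
      fix y assume y: "y \<in> K"
      show "y \<in> closure (K - {a})"
      proof (cases "y = a")
        case True
        have "y islimpt K" using closure_limpt y unfolding K_def by blast
        then have "y islimpt (K - {y})" by (subst islimpt_punctured[symmetric])
        then have "y islimpt (K - {a})" using True by simp
        then show ?thesis unfolding closure_def by blast
      next
        case False
        show ?thesis by (rule subsetD[OF closure_subset]) (use y False in simp)
      qed
    qed
    ultimately show ?thesis using a by blast
  qed
  have "K \<subseteq> closure (\<Inter>\<G>)"
  proof (rule Baire)
    show "closed K" unfolding K_def by (rule closed_closure)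
    show "countable \<G>" unfolding \<G>_def using cK by (rule countable_image)
    show "openin (top_of_set K) T \<and> K \<subseteq> closure T" if "T \<in> \<G>" for T using dense that .
  qed
  moreover obtain a where aK: "a \<in> K" using FixR_nonempty closure_subset unfolding K_def by blast
  moreover have "\<Inter>\<G> = {}"
  proof -
    have "\<Inter>\<G> \<subseteq> K - {a}" using aK unfolding \<G>_def by blast
    moreover have "\<Inter>\<G> \<subseteq> K" using aK unfolding \<G>_def by blast
    moreover have "x \<notin> \<Inter>\<G>" if "x \<in> K" for x using that unfolding \<G>_def by blast
    ultimately show ?thesis by blast
  qed
  ultimately show False by simp
qed

lemma countable_dyadic: "countable dyadic"
proof -
  have "dyadic \<subseteq> (\<lambda>(k, n). real_of_int k / 2 ^ n) ` (UNIV :: (int \<times> nat) set)"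
    by (auto simp: dyadic_def)
  then show ?thesis by (rule countable_subset) simp
qed

theorem proposition6p6:
  shows "uncountable FixR \<and> FixR \<subseteq> {0..1} - dyadic
    \<and> cantor_set (closure FixR) \<and> closure FixR \<in> null_sets lborel
    \<and> closure FixR - FixR \<subseteq> dyadic"
proof (intro conjI)
  show "uncountable FixR"
  proof
    assume "countable FixR"
    then have c: "countable (FixR \<union> dyadic)" using countable_dyadic by (rule countable_Un)
    have sub: "closure FixR \<subseteq> FixR \<union> dyadic" using closure_minus by blast
    have "countable (closure FixR)" by (rule countable_subset[OF sub c])
    then show False using closure_uncountable by contradiction
  qed
  have "FixR \<subseteq> {0..1}" unfolding FixR_def by blast
  then show "FixR \<subseteq> {0..1} - dyadic" using FixR_dyadic by blast
  show null: "closure FixR \<in> null_sets lborel" by (rule closure_null)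
  show "closure FixR - FixR \<subseteq> dyadic" by (rule closure_minus)
  show "cantor_set (closure FixR)"
    unfolding cantor_set_def
  proof (intro conjI ballI allI impI)
    show "closure FixR \<noteq> {}" using FixR_nonempty by simp
    show "compact (closure FixR)"
      unfolding compact_closure by (rule bounded_subset[OF bounded_closed_interval[of 0 1]]) (auto simp: FixR_def)
    show "x islimpt closure FixR" if "x \<in> closure FixR" for x using closure_limpt that .
    fix C assume C: "C \<subseteq> closure FixR" "connected C"
    show "\<exists>a. C \<subseteq> {a}"
    proof (cases "C = {}")
      case True then show ?thesis by auto
    next
      case False
      then obtain a where a: "a \<in> C" by auto
      have "C \<subseteq> {a}"
      proof
        fix y assume y: "y \<in> C"
        show "y \<in> {a}"
        proof (rule ccontr)
          assume "y \<notin> {a}"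
          define l where "l = min a y"
          define u where "u = max a y"
          have lu: "l < u" using \<open>y \<notin> {a}\<close> by (auto simp: l_def u_def)
          have "is_interval C" using C(2) is_interval_connected_1 by blast
          then have iv: "\<And>p q z. p \<in> C \<Longrightarrow> q \<in> C \<Longrightarrow> p \<le> z \<Longrightarrow> z \<le> q \<Longrightarrow> z \<in> C"
            unfolding is_interval_1 by blast
          have lC: "l \<in> C" using a y unfolding l_def by (cases "a \<le> y") (simp_all add: min_def)
          have uC: "u \<in> C" using a y unfolding u_def by (cases "a \<le> y") (simp_all add: max_def)
          have "{l..u} \<subseteq> C" using iv[OF lC uC] by auto
          then have sub: "{l..u} \<subseteq> closure FixR" using C(1) by blast
          have ms: "closure FixR \<in> sets lborel" using null by (rule null_setsD2)
          have "emeasure lborel {l..u} \<le> emeasure lborel (closure FixR)"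
            by (rule emeasure_mono[OF sub ms])
          also have "\<dots> = 0" using null by auto
          finally show False using lu by simp
        qed
      qed
      then show ?thesis by blast
    qed
  qed
qed

end
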